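(* For $n\in\mathbb N$, $$\Phi^*_n(1)=\begin{cases}0 & n=1,\\ p^e & n=p^e \text{ with } p \text{ prime},\ e\ge1,\\ 1&\text{otherwise}.\end{cases}$$ Equivalently, $\Phi^*_n(1)=e^{\Lambda^*(n)}$ for all $n>1$.
   Context: $d\mid\mid n$ means $d\mid n$ and $\gcd(d,n/d)=1$; $(j,n)_*=\max\{d: d\mid j,\ d\mid\mid n\}$; $\Phi^*_n(x)=\prod_{1\le j\le n,\ (j,n)_*=1}(x-e^{2\pi i j/n})$. The unitary von Mangoldt function is $\Lambda^*(n)=a\log p$ if $n=p^a$ is a prime power with $a\ge1$, and $\Lambda^*(n)=0$ otherwise. *)

theory Defs
  imports "HOL-Complex_Analysis.Complex_Analysis" "HOL-Computational_Algebra.Computational_Algebra"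
begin

definition unitary_dvd :: "nat \<Rightarrow> nat \<Rightarrow> bool" where
  "unitary_dvd d n \<longleftrightarrow> d dvd n \<and> coprime d (n div d)"

definition unitary_gcd :: "nat \<Rightarrow> nat \<Rightarrow> nat" where
  "unitary_gcd j n = Max {d. d dvd j \<and> unitary_dvd d n}"

definition unitary_cyclotomic :: "nat \<Rightarrow> complex poly" where
  "unitary_cyclotomic n =
     (\<Prod>j\<in>{j. 1 \<le> j \<and> j \<le> n \<and> unitary_gcd j n = 1}.
        [:- cis (2 * pi * real j / real n), 1:])"

definition unitary_mangoldt :: "nat \<Rightarrow> real" where
  "unitary_mangoldt n =
     (if \<exists>p a. prime p \<and> a \<ge> 1 \<and> n = p ^ a
      then real (multiplicity (THE p. prime p \<and> p dvd n) n) * ln (real (THE p. prime p \<and> p dvd n))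
      else 0)"

end

theory Submission
  imports Defs
begin

definition w :: "nat \<Rightarrow> nat \<Rightarrow> complex" where
  "w n k = cis (2 * pi * real k / real n)"

lemma xn_decomp:
  assumes "n > 0"
  shows "(\<Prod>k<n. [:- w n k, 1:]) = monom 1 n - 1"
proof -
  let ?p = "monom (1::complex) n - 1"
  have c: "coeff ?p n = 1" using assms by (simp add: coeff_monom)
  have deg: "degree ?p = n"
  proof (rule antisym)
    show "degree ?p \<le> n" by (rule degree_diff_le) (simp_all add: degree_monom_le)
    show "n \<le> degree ?p" using c by (intro le_degree) simp
  qed
  have lc: "lead_coeff ?p = 1" using c deg by simp
  have pv: "poly ?p z = z ^ n - 1" for z by (simp add: poly_monom)
  have rs: "rsquarefree ?p"
    unfolding rsquarefree_roots
  proof (intro allI notI)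
    fix a assume h: "poly ?p a = 0 \<and> poly (pderiv ?p) a = 0"
    then have "a ^ n = 1" using pv by simp
    then have "a \<noteq> 0" using assms by (metis power_0_left zero_neq_one not_gr0)
    moreover have "poly (pderiv ?p) a = of_nat n * a ^ (n - 1)"
      by (simp add: pderiv_diff pderiv_monom poly_monom)
    ultimately show False using h assms by simp
  qed
  have "?p = smult (lead_coeff ?p) (\<Prod>z|poly ?p z = 0. [:-z, 1:])"
    using complex_poly_decompose_rsquarefree[OF rs] by simp
  also have "\<dots> = (\<Prod>z\<in>{z. z ^ n = 1}. [:-z, 1:])" using lc pv by simp
  also have "\<dots> = (\<Prod>k<n. [:- w n k, 1:])"
    unfolding w_def
    by (rule prod.reindex_bij_betw[symmetric, OF Complex.bij_betw_roots_unity[OF assms]])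
  finally show ?thesis by simp
qed

lemma w0[simp]: "w n 0 = 1" by (simp add: w_def)

lemma prod_one_minus_w:
  assumes "n > 0"
  shows "(\<Prod>k\<in>{1..<n}. 1 - w n k) = of_nat n"
proof -
  let ?Q = "\<Prod>k\<in>{1..<n}. [:- w n k, 1:]"
  have "{..<n} = insert 0 {1..<n}" using assms by auto
  then have "[:-1, 1:] * ?Q = monom 1 n - 1" using xn_decomp[OF assms] by simp
  moreover have "[:-1, 1:] * (\<Sum>i<n. monom 1 i) = (monom 1 n - 1 :: complex poly)"
  proof (rule poly_eq_poly_eq_iff[THEN iffD1], rule ext)
    fix x :: complex
    show "poly ([:-1, 1:] * (\<Sum>i<n. monom 1 i)) x = poly (monom 1 n - 1) x"
      by (simp add: poly_sum poly_monom power_diff_1_eq algebra_simps)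
  qed
  ultimately have "?Q = (\<Sum>i<n. monom 1 i)" by (metis mult_left_cancel pCons_eq_0_iff zero_neq_one)
  then have "poly ?Q 1 = of_nat n" by (simp add: poly_sum poly_monom)
  then show ?thesis by (simp add: poly_prod)
qed

definition E :: "nat \<Rightarrow> nat set \<Rightarrow> complex" where
  "E n D = (\<Prod>j\<in>{j. 1 \<le> j \<and> j < n \<and> (\<forall>q\<in>D. \<not> q dvd j)}. 1 - w n j)"

lemma E_empty: "n > 0 \<Longrightarrow> E n {} = of_nat n"
  unfolding E_def using prod_one_minus_w[of n]
  by (simp add: atLeastLessThan_def atLeast_def lessThan_def Collect_conj_eq Int_commute)

lemma w_mult: "q > 0 \<Longrightarrow> w (q * m) (q * k) = w m k"
  unfolding w_def by (simp add: field_simps)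

lemma E_split:
  assumes q: "q > 0" "q dvd n" and cop: "\<forall>q'\<in>D. coprime q' q"
  shows "E n D = E n (insert q D) * E (n div q) D"
proof -
  obtain m where n: "n = q * m" using q by blast
  have mq: "n div q = m" using n q by simp
  let ?A = "{j. 1 \<le> j \<and> j < n \<and> (\<forall>q'\<in>D. \<not> q' dvd j)}"
  let ?A1 = "{j. 1 \<le> j \<and> j < n \<and> (\<forall>q'\<in>insert q D. \<not> q' dvd j)}"
  let ?A2 = "{j. 1 \<le> j \<and> j < n \<and> (\<forall>q'\<in>D. \<not> q' dvd j) \<and> q dvd j}"
  let ?B = "{k. 1 \<le> k \<and> k < m \<and> (\<forall>q'\<in>D. \<not> q' dvd k)}"
  have AU: "?A = ?A1 \<union> ?A2" by auto
  have dis: "?A1 \<inter> ?A2 = {}" by auto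
  have A2: "?A2 = (\<lambda>k. q * k) ` ?B"
  proof (intro equalityI subsetI)
    fix j assume "j \<in> ?A2"
    then obtain k where k: "j = q * k" and h: "1 \<le> j" "j < n" "\<forall>q'\<in>D. \<not> q' dvd j" by auto
    have "1 \<le> k" using h(1) k by (cases k) auto
    moreover have "k < m" using h(2) k n q by simp
    moreover have "\<forall>q'\<in>D. \<not> q' dvd k" using h(3) k by auto
    ultimately show "j \<in> (\<lambda>k. q * k) ` ?B" using k by blast
  next
    fix j assume "j \<in> (\<lambda>k. q * k) ` ?B"
    then obtain k where k: "j = q * k" "1 \<le> k" "k < m" "\<forall>q'\<in>D. \<not> q' dvd k" by auto
    have "1 \<le> j" using k q by simp
    moreover have "j < n" using k n q by simp
    moreover have "\<forall>q'\<in>D. \<not> q' dvd j"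
    proof
      fix q' assume "q' \<in> D"
      then have "coprime q' q" using cop by auto
      then show "\<not> q' dvd j" using k \<open>q' \<in> D\<close> by (simp add: coprime_dvd_mult_right_iff)
    qed
    ultimately show "j \<in> ?A2" using k by auto
  qed
  have inj: "inj_on (\<lambda>k. q * k) ?B" using q by (auto intro: inj_onI)
  have "E n D = (\<Prod>j\<in>?A1. 1 - w n j) * (\<Prod>j\<in>?A2. 1 - w n j)"
    unfolding E_def by (subst AU, rule prod.union_disjoint) (auto simp: dis)
  also have "(\<Prod>j\<in>?A2. 1 - w n j) = (\<Prod>k\<in>?B. 1 - w n (q * k))"
    by (subst A2, subst prod.reindex[OF inj]) simp
  also have "\<dots> = E (n div q) D" unfolding E_def mq n using q by (simp add: w_mult)
  finally show ?thesis unfolding E_def .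
qed

lemma E_val:
  assumes "finite D"
  shows "(\<forall>q\<in>D. q > 1 \<and> q dvd n) \<Longrightarrow> (\<forall>a\<in>D. \<forall>b\<in>D. a \<noteq> b \<longrightarrow> coprime a b) \<Longrightarrow> n > 0 \<Longrightarrow>
    E n D = (if D = {} then of_nat n else if card D = 1 then of_nat (\<Prod>D) else 1)"
  using assms
proof (induction D arbitrary: n rule: finite_induct)
  case empty
  then show ?case by (simp add: E_empty)
next
  case (insert q D)
  have q: "q > 0" "q dvd n" "q > 1" using insert.prems by auto
  have cop: "\<forall>q'\<in>D. coprime q' q" using insert.prems insert.hyps by auto
  obtain m where n: "n = q * m" using q by blast
  have m: "n div q = m" "m > 0" using n q insert.prems by auto
  have Dm: "\<forall>q'\<in>D. q' > 1 \<and> q' dvd m"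
  proof
    fix q' assume h: "q' \<in> D"
    then have "q' dvd q * m" "coprime q' q" "q' > 1" using insert.prems n cop by auto
    then show "q' > 1 \<and> q' dvd m" by (simp add: coprime_dvd_mult_right_iff)
  qed
  have pw: "\<forall>a\<in>D. \<forall>b\<in>D. a \<noteq> b \<longrightarrow> coprime a b" using insert.prems by auto
  have Dn: "\<forall>q'\<in>D. q' > 1 \<and> q' dvd n" using insert.prems by auto
  have IH1: "E n D = (if D = {} then of_nat n else if card D = 1 then of_nat (\<Prod>D) else 1)"
    using insert.IH[OF Dn pw insert.prems(3)] .
  have IH2: "E m D = (if D = {} then of_nat m else if card D = 1 then of_nat (\<Prod>D) else 1)"
    using insert.IH[OF Dm pw m(2)] .
  have split: "E n D = E n (insert q D) * E m D" using E_split[OF q(1,2) cop] m by simp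
  have nz: "E m D \<noteq> 0" using IH2 m(2) Dm
    by (auto simp: prod_zero_iff insert.hyps)
  have val: "E n (insert q D) = E n D / E m D" using split nz by (simp add: field_simps)
  show ?case
  proof (cases "D = {}")
    case True
    then show ?thesis using val IH1 IH2 n q m by (simp add: field_simps)
  next
    case False
    then have "card (insert q D) \<noteq> 1" using insert.hyps card_0_eq by fastforce
    moreover have "E n D / E m D = 1" using IH1 IH2 False nz by auto
    ultimately show ?thesis using val by simp
  qed
qed

lemma ppow_unitary:
  assumes "n > 0" "prime p" "p dvd n"
  shows "unitary_dvd (p ^ multiplicity p n) n"
proof -
  let ?q = "p ^ multiplicity p n"
  have d: "?q dvd n" by (rule multiplicity_dvd)
  have "\<not> p dvd n div ?q"
  proof
    assume "p dvd n div ?q"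
    then obtain r where r: "n div ?q = p * r" by blast
    have "n = ?q * (n div ?q)" using d by simp
    also have "\<dots> = p ^ Suc (multiplicity p n) * r" using r by simp
    finally have "p ^ Suc (multiplicity p n) dvd n" by (metis dvd_triv_left)
    then have "Suc (multiplicity p n) \<le> multiplicity p n"
      using assms by (intro multiplicity_geI) auto
    then show False by simp
  qed
  then have "coprime p (n div ?q)" using assms(2) by (simp add: prime_imp_coprime)
  then have "coprime ?q (n div ?q)" by simp
  then show ?thesis using d unfolding unitary_dvd_def by simp
qed

lemma unitary_big:
  assumes "n > 0" "unitary_dvd d n" "d > 1"
  obtains p where "prime p" "p dvd n" "p ^ multiplicity p n dvd d"
proof -
  obtain p where p: "prime p" "p dvd d" using assms(3) prime_factor_nat[of d] by auto
  have dn: "d dvd n" and cop: "coprime d (n div d)" using assms(2) unfolding unitary_dvd_def by auto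
  have "\<not> p dvd n div d"
  proof
    assume "p dvd n div d"
    then have "is_unit p" using p cop coprime_common_divisor by blast
    then show False using p by simp
  qed
  then have m0: "multiplicity p (n div d) = 0" by (simp add: not_dvd_imp_multiplicity_0)
  have nd: "n = d * (n div d)" using dn by simp
  have "d \<noteq> 0" "n div d \<noteq> 0" using assms dn by (auto simp: dvd_div_eq_0_iff)
  then have "multiplicity p n = multiplicity p d + multiplicity p (n div d)"
    using p nd prime_elem_multiplicity_mult_distrib[of p d "n div d"] by simp
  then have "multiplicity p n = multiplicity p d" using m0 by simp
  then have "p ^ multiplicity p n dvd d" by (simp add: multiplicity_dvd)
  moreover have "p dvd n" by (rule dvd_trans[OF p(2) dn])
  ultimately show ?thesis using p that by blast
qed

lemma ugcd_iff:
  assumes "n > 0" "j \<ge> 1"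
  shows "unitary_gcd j n = 1 \<longleftrightarrow> (\<forall>p\<in>prime_factors n. \<not> p ^ multiplicity p n dvd j)"
proof -
  let ?M = "{d. d dvd j \<and> unitary_dvd d n}"
  have fin: "finite ?M"
  proof (rule finite_subset[of _ "{..j}"])
    show "?M \<subseteq> {..j}"
    proof
      fix d assume "d \<in> ?M"
      then have "d dvd j" by simp
      then show "d \<in> {..j}" using assms dvd_imp_le[of d j] by simp
    qed
  qed simp
  have one: "1 \<in> ?M" by (simp add: unitary_dvd_def)
  have pos: "\<forall>d\<in>?M. d \<ge> 1"
  proof
    fix d assume "d \<in> ?M"
    then have "d dvd j" by simp
    then have "d > 0" using assms dvd_pos_nat[of j d] by simp
    then show "d \<ge> 1" by simp
  qed
  have "unitary_gcd j n = 1 \<longleftrightarrow> (\<forall>d\<in>?M. d \<le> 1)"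
    unfolding unitary_gcd_def
  proof
    assume "Max ?M = 1"
    then show "\<forall>d\<in>?M. d \<le> 1" using Max_ge[OF fin] by metis
  next
    assume h: "\<forall>d\<in>?M. d \<le> 1"
    have "Max ?M \<in> ?M" using Max_in[OF fin] one by blast
    then have "Max ?M \<le> 1" "Max ?M \<ge> 1" using h pos by blast+
    then show "Max ?M = 1" by (rule antisym)
  qed
  also have "\<dots> \<longleftrightarrow> (\<forall>p\<in>prime_factors n. \<not> p ^ multiplicity p n dvd j)"
  proof
    assume h: "\<forall>d\<in>?M. d \<le> 1"
    show "\<forall>p\<in>prime_factors n. \<not> p ^ multiplicity p n dvd j"
    proof (intro ballI notI)
      fix p assume p: "p \<in> prime_factors n" and dv: "p ^ multiplicity p n dvd j"
      have pp: "prime p" "p dvd n" using p assms by auto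
      have "p ^ multiplicity p n \<in> ?M" using dv ppow_unitary[OF assms(1) pp] by simp
      moreover have "multiplicity p n \<ge> 1" using pp assms
        by (auto simp: Suc_le_eq prime_multiplicity_gt_zero_iff)
      then have "p ^ multiplicity p n > 1" using pp one_less_power[of p "multiplicity p n"] prime_gt_1_nat[of p] by simp
      ultimately show False using h by fastforce
    qed
  next
    assume h: "\<forall>p\<in>prime_factors n. \<not> p ^ multiplicity p n dvd j"
    show "\<forall>d\<in>?M. d \<le> 1"
    proof (rule ccontr)
      assume "\<not> (\<forall>d\<in>?M. d \<le> 1)"
      then obtain d where d: "d dvd j" "unitary_dvd d n" "d > 1" by auto
      then obtain p where pp: "prime p" "p dvd n" "p ^ multiplicity p n dvd d"
        using unitary_big[OF assms(1)] by blast
      have "p \<in> prime_factors n" using pp assms by (simp add: in_prime_factors_iff)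
      then have "\<not> p ^ multiplicity p n dvd j" using h by blast
      moreover have "p ^ multiplicity p n dvd j" using dvd_trans[OF pp(3) d(1)] .
      ultimately show False by contradiction
    qed
  qed
  finally show ?thesis .
qed


lemma pp_props:
  fixes n :: nat
  assumes "n > 1"
  defines "D \<equiv> (\<lambda>p. p ^ multiplicity p n) ` prime_factors n"
  shows "finite D" "\<forall>q\<in>D. q > 1 \<and> q dvd n" "\<forall>a\<in>D. \<forall>b\<in>D. a \<noteq> b \<longrightarrow> coprime a b"
    "D \<noteq> {}"
proof -
  show "finite D" unfolding D_def by simp
  show "\<forall>q\<in>D. q > 1 \<and> q dvd n"
  proof
    fix q assume "q \<in> D"
    then obtain p where p: "p \<in> prime_factors n" "q = p ^ multiplicity p n" unfolding D_def by auto
    have pp: "prime p" "p dvd n" using p assms by auto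
    have "multiplicity p n \<ge> 1" using pp assms
      by (auto simp: Suc_le_eq prime_multiplicity_gt_zero_iff)
    then have "q > 1" using pp p one_less_power[of p "multiplicity p n"] prime_gt_1_nat[of p] by simp
    moreover have "q dvd n" using p multiplicity_dvd by simp
    ultimately show "q > 1 \<and> q dvd n" by simp
  qed
  show "\<forall>a\<in>D. \<forall>b\<in>D. a \<noteq> b \<longrightarrow> coprime a b"
  proof (intro ballI impI)
    fix a b assume "a \<in> D" "b \<in> D" "a \<noteq> b"
    then obtain p p' where p: "p \<in> prime_factors n" "a = p ^ multiplicity p n"
      and p': "p' \<in> prime_factors n" "b = p' ^ multiplicity p' n" unfolding D_def by auto
    have "p \<noteq> p'" using p p' \<open>a \<noteq> b\<close> by auto
    then have "coprime p p'" using p(1) p'(1) by (intro primes_coprime) auto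
    then show "coprime a b" using p p' by simp
  qed
  have "prime_factors n \<noteq> {}" using assms by (simp add: prime_factorization_empty_iff)
  then show "D \<noteq> {}" unfolding D_def by simp
qed

lemma pp_card:
  fixes n :: nat
  assumes "n > 1"
  defines "D \<equiv> (\<lambda>p. p ^ multiplicity p n) ` prime_factors n"
  shows "card D = 1 \<longleftrightarrow> (\<exists>p e. prime p \<and> e \<ge> 1 \<and> n = p ^ e)"
    "card D = 1 \<Longrightarrow> \<Prod>D = n"
proof -
  have A: "prime p \<Longrightarrow> e \<ge> 1 \<Longrightarrow> n = p ^ e \<Longrightarrow> D = {n}" for p e
  proof -
    assume h: "prime p" "e \<ge> 1" "n = p ^ e"
    have "prime_factors n = {p}" using h by (simp add: prime_factorization_prime_power)
    then show "D = {n}" unfolding D_def using h by simp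
  qed
  have B: "card D = 1 \<Longrightarrow> \<exists>p e. prime p \<and> e \<ge> 1 \<and> n = p ^ e"
  proof -
    assume "card D = 1"
    then obtain q where q: "D = {q}" using card_1_singletonE by blast
    have "prime_factors n \<noteq> {}" using assms by (simp add: prime_factorization_empty_iff)
    then obtain p where p: "p \<in> prime_factors n" by blast
    have pq: "p ^ multiplicity p n = q" using p q unfolding D_def by auto
    have P: "prime_factors n = {p}"
    proof (intro equalityI subsetI)
      fix p' assume p': "p' \<in> prime_factors n"
      then have "p' ^ multiplicity p' n = q" using q unfolding D_def by auto
      moreover have "multiplicity p' n \<ge> 1"
      proof -
        have "prime p'" "p' dvd n" using p' by auto
        then show ?thesis using assms prime_multiplicity_gt_zero_iff[of p' n] by auto
      qed
      moreover have "p' dvd p' ^ multiplicity p' n" using calculation(2) by (intro dvd_power) auto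
      ultimately have "p' dvd p ^ multiplicity p n" using pq by simp
      moreover have "prime p'" using p' by auto
      ultimately have "p' dvd p" using prime_dvd_power by blast
      moreover have "prime p" using p by auto
      ultimately show "p' \<in> {p}" using \<open>prime p'\<close> primes_dvd_imp_eq[of p' p] by auto
    qed (use p in auto)
    have "n = (\<Prod>p \<in> prime_factors n. p ^ multiplicity p n)" using assms prod_prime_factors[of n] by simp
    also have "\<dots> = p ^ multiplicity p n" using P by simp
    finally have "n = p ^ multiplicity p n" .
    moreover have "multiplicity p n \<ge> 1"
    proof -
      have "prime p" "p dvd n" using p by auto
      then show ?thesis using assms prime_multiplicity_gt_zero_iff[of p n] by auto
    qed
    moreover have "prime p" using p by auto
    ultimately show ?thesis by blast
  qed
  show "card D = 1 \<longleftrightarrow> (\<exists>p e. prime p \<and> e \<ge> 1 \<and> n = p ^ e)"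
    using A B by auto
  show "card D = 1 \<Longrightarrow> \<Prod>D = n" using A B by fastforce
qed

lemma mangoldt_val:
  fixes n :: nat
  shows "(\<exists>p e. prime p \<and> e \<ge> 1 \<and> n = p ^ e) \<Longrightarrow> exp (unitary_mangoldt n) = real n"
    "\<not>(\<exists>p e. prime p \<and> e \<ge> 1 \<and> n = p ^ e) \<Longrightarrow> exp (unitary_mangoldt n) = 1"
proof -
  assume "\<exists>p e. prime p \<and> e \<ge> 1 \<and> n = p ^ e"
  then obtain p e where h: "prime p" "e \<ge> 1" "n = p ^ e" by blast
  have T: "(THE p. prime p \<and> p dvd n) = p"
  proof (rule the_equality)
    show "prime p \<and> p dvd n" using h by (simp add: dvd_power)
    show "prime p' \<and> p' dvd n \<Longrightarrow> p' = p" for p'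
      using h prime_dvd_power primes_dvd_imp_eq by blast
  qed
  have "unitary_mangoldt n = real e * ln (real p)"
    unfolding unitary_mangoldt_def using h T by auto
  also have "exp \<dots> = real p ^ e" using h prime_gt_0_nat[of p]
    by (simp add: exp_of_nat_mult)
  finally show "exp (unitary_mangoldt n) = real n" using h by simp
next
  assume h: "\<not>(\<exists>p e. prime p \<and> e \<ge> 1 \<and> n = p ^ e)"
  have "unitary_mangoldt n = 0" unfolding unitary_mangoldt_def by (rule if_not_P[OF h])
  then show "exp (unitary_mangoldt n) = 1" by simp
qed

theorem lemma4p1:
  fixes n :: nat
  assumes "n \<ge> 1"
  shows "poly (unitary_cyclotomic n) 1 =
           (if n = 1 then 0
            else if \<exists>p e. prime p \<and> e \<ge> 1 \<and> n = p ^ e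
            then of_nat n
            else 1)
         \<and> (n > 1 \<longrightarrow> poly (unitary_cyclotomic n) 1 = of_real (exp (unitary_mangoldt n)))"
proof (cases "n = 1")
  case True
  have "{j. 1 \<le> j \<and> j \<le> n \<and> unitary_gcd j n = 1} = {1}"
    using True ugcd_iff[of 1 1] by auto
  then show ?thesis using True unfolding unitary_cyclotomic_def by (simp add: poly_prod)
next
  case False
  then have n: "n > 1" using assms by simp
  define D where "D = (\<lambda>p. p ^ multiplicity p n) ` prime_factors n"
  note props = pp_props[OF n, folded D_def]
  note cards = pp_card[OF n, folded D_def]
  have S: "{j. 1 \<le> j \<and> j \<le> n \<and> unitary_gcd j n = 1} = {j. 1 \<le> j \<and> j < n \<and> (\<forall>q\<in>D. \<not> q dvd j)}"
  proof (intro equalityI subsetI)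
    fix j assume j: "j \<in> {j. 1 \<le> j \<and> j \<le> n \<and> unitary_gcd j n = 1}"
    then have h: "\<forall>p\<in>prime_factors n. \<not> p ^ multiplicity p n dvd j" using ugcd_iff[of n j] n by auto
    then have "\<forall>q\<in>D. \<not> q dvd j" unfolding D_def by auto
    moreover have "j \<noteq> n" using props(2,4) \<open>\<forall>q\<in>D. \<not> q dvd j\<close> by auto
    ultimately show "j \<in> {j. 1 \<le> j \<and> j < n \<and> (\<forall>q\<in>D. \<not> q dvd j)}" using j by auto
  next
    fix j assume j: "j \<in> {j. 1 \<le> j \<and> j < n \<and> (\<forall>q\<in>D. \<not> q dvd j)}"
    then have "\<forall>p\<in>prime_factors n. \<not> p ^ multiplicity p n dvd j" unfolding D_def by auto
    then show "j \<in> {j. 1 \<le> j \<and> j \<le> n \<and> unitary_gcd j n = 1}" using j ugcd_iff[of n j] n by auto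
  qed
  have val: "poly (unitary_cyclotomic n) 1 = E n D"
    unfolding unitary_cyclotomic_def E_def S by (simp add: poly_prod w_def)
  have EV: "E n D = (if card D = 1 then of_nat n else 1)"
    using E_val[OF props(1) props(2) props(3)] n props(4) cards(2) by auto
  show ?thesis
  proof (cases "\<exists>p e. prime p \<and> e \<ge> 1 \<and> n = p ^ e")
    case True
    then show ?thesis using val EV cards(1) mangoldt_val(1)[OF True] n by simp
  next
    case F: False
    then show ?thesis using val EV cards(1) mangoldt_val(2)[OF F] n by simp
  qed
qed

end
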